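(* Let $\Gamma$ be a geometrically finite Fuchsian group such that $\infty\notin\widehat{\mathbb{R}}_{\mathrm{st}}$. Suppose $\Gamma$ is not conjugate in $\mathrm{PSL}_2(\mathbb{R})$ to any group generated by $z\mapsto -1/z$ and $z\mapsto \lambda z$ with $\lambda>1$, and suppose $\Lambda(\Gamma)$ consists of more than one point. For $g\in\Gamma\setminus\Gamma_\infty$ let $\mathscr{W}(g)\subseteq\mathbb{R}$ be the open interval whose endpoints are the two endpoints in $\mathbb{R}$ of the isometric sphere $\mathrm{I}(g)$. Then for every $g\in\Gamma\setminus\Gamma_\infty$ we have $\mathscr{W}(g)\cap\Lambda(\Gamma)\neq\varnothing$.
   Context: A Fuchsian group is a discrete subgroup of $\mathrm{PSL}_2(\mathbb{R})$ acting on the upper half-plane $\mathbb{H}$ and on $\widehat{\mathbb{R}}=\mathbb{R}\cup\{\infty\}$ by linear fractional transformations. $\Lambda(\Gamma)$ is its limit set and $\widehat{\mathbb{R}}_{\mathrm{st}}$ is $\Lambda(\Gamma)$ with all parabolic fixed points of $\Gamma$ removed. $\Gamma_\infty$ denotes the stabilizer of $\infty$ in $\Gamma$ (trivial or generated by a parabolic translation $z\mapsto z+\lambda$, under the assumption $\infty\notin\widehat{\mathbb{R}}_{\mathrm{st}}$). For $g=\begin{bmatrix}a&b\\c&d\end{bmatrix}\in\Gamma\setminus\Gamma_\infty$ (so $c\ne0$), the isometric sphere is $\mathrm{I}(g)=\{z\in\mathbb{H}: |z+\tfrac{d}{c}|=\tfrac{1}{|c|}\}$; thus $\mathscr{W}(g)=(-\tfrac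 dc-\tfrac1{|c|},\,-\tfrac dc+\tfrac1{|c|})$. *)

theory Defs
  imports "HOL-Analysis.Analysis"
begin

text \<open>A matrix [a b; c d] is the tuple (a,b,c,d).\<close>
type_synonym mat2 = "real \<times> real \<times> real \<times> real"

definition mmul :: "mat2 \<Rightarrow> mat2 \<Rightarrow> mat2" where
  "mmul M N = (case M of (a,b,c,d) \<Rightarrow> case N of (a',b',c',d') \<Rightarrow>
      (a*a' + b*c', a*b' + b*d', c*a' + d*c', c*b' + d*d'))"

definition mdet :: "mat2 \<Rightarrow> real" where
  "mdet M = (case M of (a,b,c,d) \<Rightarrow> a*d - b*c)"

definition mid :: mat2 where "mid = (1,0,0,1)"

definition mneg :: "mat2 \<Rightarrow> mat2" where
  "mneg M = (case M of (a,b,c,d) \<Rightarrow> (-a,-b,-c,-d))"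

text \<open>Inverse of a determinant-one matrix.\<close>
definition minv :: "mat2 \<Rightarrow> mat2" where
  "minv M = (case M of (a,b,c,d) \<Rightarrow> (d,-b,-c,a))"

definition entry_c :: "mat2 \<Rightarrow> real" where "entry_c M = (case M of (a,b,c,d) \<Rightarrow> c)"
definition entry_d :: "mat2 \<Rightarrow> real" where "entry_d M = (case M of (a,b,c,d) \<Rightarrow> d)"

definition mtrace :: "mat2 \<Rightarrow> real" where
  "mtrace M = (case M of (a,b,c,d) \<Rightarrow> a + d)"

definition mob :: "mat2 \<Rightarrow> complex \<Rightarrow> complex" where
  "mob M z = (case M of (a,b,c,d) \<Rightarrow>
      (of_real a * z + of_real b) / (of_real c * z + of_real d))"

datatype extR = Fin real | Infty

definition ext_act :: "mat2 \<Rightarrow> extR \<Rightarrow> extR" where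
  "ext_act M p = (case M of (a,b,c,d) \<Rightarrow>
     (case p of
        Fin x \<Rightarrow> (if c*x + d = 0 then Infty else Fin ((a*x + b) / (c*x + d)))
      | Infty \<Rightarrow> (if c = 0 then Infty else Fin (a / c))))"

text \<open>A subgroup of PSL(2,R) is represented by its full preimage in SL(2,R),
  i.e. a subgroup of SL(2,R) containing -I.\<close>
definition psl_subgroup :: "mat2 set \<Rightarrow> bool" where
  "psl_subgroup G \<longleftrightarrow>
     (\<forall>g\<in>G. mdet g = 1) \<and> mid \<in> G \<and> mneg mid \<in> G \<and>
     (\<forall>g\<in>G. \<forall>h\<in>G. mmul g h \<in> G) \<and> (\<forall>g\<in>G. minv g \<in> G)"

definition fuchsian :: "mat2 set \<Rightarrow> bool" where
  "fuchsian G \<longleftrightarrow> psl_subgroup G \<and> (\<forall>g\<in>G. g isolated_in G)"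

definition orbit :: "mat2 set \<Rightarrow> complex \<Rightarrow> complex set" where
  "orbit G z = (\<lambda>g. mob g z) ` G"

text \<open>A real point x is an accumulation point iff it is a limit point of the orbit in \<open>\<complex>\<close>;
  \<open>\<infinity>\<close> is an accumulation point iff the orbit is unbounded.\<close>
definition limit_set :: "mat2 set \<Rightarrow> extR set" where
  "limit_set G =
     {Fin x | x. \<exists>z. 0 < Im z \<and> complex_of_real x islimpt orbit G z} \<union>
     {Infty | _::unit. \<exists>z. 0 < Im z \<and> \<not> bounded (orbit G z)}"

definition parabolic :: "mat2 \<Rightarrow> bool" where
  "parabolic g \<longleftrightarrow> \<bar>mtrace g\<bar> = 2 \<and> g \<noteq> mid \<and> g \<noteq> mneg mid"

definition parabolic_fixed_point :: "mat2 set \<Rightarrow> extR \<Rightarrow> bool" where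
  "parabolic_fixed_point G p \<longleftrightarrow> (\<exists>g\<in>G. parabolic g \<and> ext_act g p = p)"

definition Rst :: "mat2 set \<Rightarrow> extR set" where
  "Rst G = {p \<in> limit_set G. \<not> parabolic_fixed_point G p}"

definition hdist :: "complex \<Rightarrow> complex \<Rightarrow> real" where
  "hdist z w = arcosh (1 + (cmod (z - w))\<^sup>2 / (2 * Im z * Im w))"

definition dirichlet_region :: "mat2 set \<Rightarrow> complex \<Rightarrow> complex set" where
  "dirichlet_region F p = {z. 0 < Im z \<and> (\<forall>g\<in>F. hdist z p \<le> hdist z (mob g p))}"

text \<open>Geometrically finite: some Dirichlet fundamental domain (centre p not fixed by any
  non-identity element) is a finite-sided polygon, i.e. it is cut out by finitely many of
  its defining half-planes.\<close>
definition geometrically_finite :: "mat2 set \<Rightarrow> bool" where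
  "geometrically_finite G \<longleftrightarrow>
     (\<exists>p. 0 < Im p \<and> (\<forall>g\<in>G. mob g p = p \<longrightarrow> g = mid \<or> g = mneg mid) \<and>
          (\<exists>F. F \<subseteq> G \<and> finite F \<and> dirichlet_region G p = dirichlet_region F p))"

inductive_set gen_group :: "mat2 set \<Rightarrow> mat2 set" for X where
  gen_id: "mid \<in> gen_group X"
| gen_base: "x \<in> X \<Longrightarrow> x \<in> gen_group X"
| gen_mul: "x \<in> gen_group X \<Longrightarrow> y \<in> gen_group X \<Longrightarrow> mmul x y \<in> gen_group X"
| gen_inv: "x \<in> gen_group X \<Longrightarrow> minv x \<in> gen_group X"

text \<open>Preimage in SL(2,R) of the subgroup of PSL(2,R) generated by
  \<open>z \<mapsto> -1/z\<close> and \<open>z \<mapsto> \<lambda>z\<close>.\<close>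
definition special_group :: "real \<Rightarrow> mat2 set" where
  "special_group lam = gen_group {(0,-1,1,0), (sqrt lam, 0, 0, 1 / sqrt lam), mneg mid}"

definition psl_conjugate :: "mat2 set \<Rightarrow> mat2 set \<Rightarrow> bool" where
  "psl_conjugate G H \<longleftrightarrow> (\<exists>h. mdet h = 1 \<and> G = (\<lambda>g. mmul (mmul h g) (minv h)) ` H)"

text \<open>\<open>\<W>(g)\<close>: the open interval spanned by the isometric sphere of g (c \<noteq> 0).\<close>
definition W_int :: "mat2 \<Rightarrow> real set" where
  "W_int g = {- entry_d g / entry_c g - 1 / \<bar>entry_c g\<bar> <..< - entry_d g / entry_c g + 1 / \<bar>entry_c g\<bar>}"

end

theory Submission
  imports Defs
begin


lemma mmul_simp: "mmul (a,b,c,d) (a',b',c',d') = (a* a' + b* c', a* b' + b* d', c* a' + d* c', c* b' + d* d')"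
  by (simp add: mmul_def)
lemma mdet_simp: "mdet (a,b,c,d) = a* d - b* c" by (simp add: mdet_def)
lemma minv_simp: "minv (a,b,c,d) = (d,-b,-c,a)" by (simp add: minv_def)
lemma mneg_simp: "mneg (a,b,c,d) = (-a,-b,-c,-d)" by (simp add: mneg_def)
lemma entry_simps: "entry_c (a,b,c,d) = c" "entry_d (a,b,c,d) = d" by (simp_all add: entry_c_def entry_d_def)
lemma mtrace_simp: "mtrace (a,b,c,d) = a + d" by (simp add: mtrace_def)
lemma mob_simp: "mob (a,b,c,d) z = (of_real a * z + of_real b) / (of_real c * z + of_real d)"
  by (simp add: mob_def)
lemma ext_act_simps:
  "ext_act (a,b,c,d) (Fin x) = (if c* x + d = 0 then Infty else Fin ((a* x + b) / (c* x + d)))"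
  "ext_act (a,b,c,d) Infty = (if c = 0 then Infty else Fin (a / c))"
  by (simp_all add: ext_act_def)

lemmas msimps = mmul_simp mdet_simp minv_simp mneg_simp entry_simps mtrace_simp mob_simp ext_act_simps mid_def

lemma mmul_assoc: "mmul (mmul A B) C = mmul A (mmul B C)"
  by (cases A; cases B; cases C) (simp add: msimps algebra_simps)
lemma mmul_mid [simp]: "mmul mid A = A" "mmul A mid = A"
  by (cases A; simp add: msimps)+
lemma minv_mul: "mdet A = 1 \<Longrightarrow> mmul (minv A) A = mid"
  by (cases A) (auto simp: msimps algebra_simps)
lemma mul_minv: "mdet A = 1 \<Longrightarrow> mmul A (minv A) = mid"
  by (cases A) (auto simp: msimps algebra_simps)
lemma mdet_mmul: "mdet (mmul A B) = mdet A * mdet B"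
  by (cases A; cases B) (simp add: msimps algebra_simps)
lemma mdet_minv: "mdet (minv A) = mdet A"
  by (cases A) (simp add: msimps algebra_simps)
lemma mneg_eq: "mneg A = mmul (mneg mid) A"
  by (cases A) (simp add: msimps)

lemma denom_nz:
  assumes "mdet (a,b,c,d) = 1" "0 < Im z"
  shows "of_real c * z + of_real d \<noteq> 0"
proof
  assume h: "of_real c * z + of_real d = 0"
  hence "Im (of_real c * z + of_real d) = 0" by simp
  hence "c * Im z = 0" by simp
  hence "c = 0" using assms(2) by simp
  with h have "d = 0" by simp
  with \<open>c = 0\<close> assms(1) show False by (simp add: msimps)
qed

lemma Im_mob:
  assumes "mdet (a,b,c,d) = 1"
  shows "Im (mob (a,b,c,d) z) = Im z / (cmod (of_real c * z + of_real d))\<^sup>2"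
proof -
  have "Im (mob (a,b,c,d) z) = (Im (of_real a * z + of_real b) * Re (of_real c * z + of_real d) - Re (of_real a * z + of_real b) * Im (of_real c * z + of_real d)) / (cmod (of_real c * z + of_real d))\<^sup>2"
    by (simp add: msimps Im_divide')
  also have "Im (of_real a * z + of_real b) * Re (of_real c * z + of_real d) - Re (of_real a * z + of_real b) * Im (of_real c * z + of_real d) = (a* d - b* c) * Im z"
    by (simp add: algebra_simps)
  finally show ?thesis using assms by (simp add: msimps)
qed

lemma Im_mob_pos:
  assumes "mdet M = 1" "0 < Im z" shows "0 < Im (mob M z)"
proof -
  obtain a b c d where M: "M = (a,b,c,d)" by (cases M) auto
  show ?thesis using Im_mob[of a b c d z] denom_nz[of a b c d z] assms M by simp
qed

lemma mob_mmul:
  assumes "mdet A = 1" "mdet B = 1" "0 < Im z"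
  shows "mob (mmul A B) z = mob A (mob B z)"
proof -
  obtain a b c d where A: "A = (a,b,c,d)" by (cases A) auto
  obtain a' b' c' d' where B: "B = (a',b',c',d')" by (cases B) auto
  have n1: "of_real c' * z + of_real d' \<noteq> 0" using denom_nz assms B by simp
  have n2: "of_real c * mob B z + of_real d \<noteq> 0" using denom_nz[of a b c d "mob B z"] Im_mob_pos[of B z] assms A by simp
  have n3: "of_real (c* a' + d* c') * z + of_real (c* b' + d* d') \<noteq> 0"
    using denom_nz[of "a* a' + b* c'" "a* b' + b* d'" "c* a' + d* c'" "c* b' + d* d'" z] assms A B mdet_mmul[of A B]
    by (simp add: mmul_simp)
  define N where "N = of_real a' * z + of_real b'"
  define D where "D = of_real c' * z + of_real d'"
  have mB: "mob B z = N / D" by (simp add: B N_def D_def msimps)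
  have D0: "D \<noteq> 0" using n1 D_def by simp
  have n2': "of_real c * N + of_real d * D \<noteq> 0"
  proof
    assume "of_real c * N + of_real d * D = 0"
    hence "(of_real c * N + of_real d * D)/D = 0" by simp
    moreover have "of_real c * mob B z + of_real d = (of_real c * N + of_real d * D)/D"
      using D0 by (simp add: mB field_simps)
    ultimately have "of_real c * mob B z + of_real d = 0" by simp
    with n2 show False by simp
  qed
  have e1: "of_real a * (N/D) + of_real b = (of_real a * N + of_real b * D)/D"
    using D0 by (simp add: field_simps)
  have e2: "of_real c * (N/D) + of_real d = (of_real c * N + of_real d * D)/D"
    using D0 by (simp add: field_simps)
  have "mob A (mob B z) = ((of_real a * N + of_real b * D)/D) / ((of_real c * N + of_real d * D)/D)"
    by (simp only: A mB mob_simp e1 e2)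
  also have "\<dots> = (of_real a * N + of_real b * D) / (of_real c * N + of_real d * D)"
    using D0 by simp
  also have "\<dots> = mob (mmul A B) z"
    by (simp add: A B msimps N_def D_def algebra_simps)
  finally show ?thesis by simp
qed




lemma psl_det: "psl_subgroup G \<Longrightarrow> g \<in> G \<Longrightarrow> mdet g = 1" by (simp add: psl_subgroup_def)
lemma psl_mul: "psl_subgroup G \<Longrightarrow> g \<in> G \<Longrightarrow> h \<in> G \<Longrightarrow> mmul g h \<in> G" by (simp add: psl_subgroup_def)
lemma psl_inv: "psl_subgroup G \<Longrightarrow> g \<in> G \<Longrightarrow> minv g \<in> G" by (simp add: psl_subgroup_def)
lemma psl_neg: "psl_subgroup G \<Longrightarrow> g \<in> G \<Longrightarrow> mneg g \<in> G"
proof -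
  assume G: "psl_subgroup G" and g: "g \<in> G"
  have "mneg mid \<in> G" using G by (simp add: psl_subgroup_def)
  hence "mmul (mneg mid) g \<in> G" using psl_mul[OF G _ g] by blast
  thus ?thesis by (simp only: mneg_eq[symmetric])
qed

lemma orbit_Im: "psl_subgroup G \<Longrightarrow> 0 < Im z \<Longrightarrow> w \<in> orbit G z \<Longrightarrow> 0 < Im w"
  unfolding orbit_def using Im_mob_pos psl_det by blast

lemma orbit_closed: "psl_subgroup G \<Longrightarrow> 0 < Im z \<Longrightarrow> w \<in> orbit G z \<Longrightarrow> g \<in> G \<Longrightarrow> mob g w \<in> orbit G z"
proof -
  assume G: "psl_subgroup G" and z: "0 < Im z" and w: "w \<in> orbit G z" and g: "g \<in> G"
  obtain h where h: "h \<in> G" "w = mob h z" using w unfolding orbit_def by auto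
  have "mob g w = mob (mmul g h) z" using mob_mmul[OF psl_det[OF G g] psl_det[OF G h(1)] z] h(2) by simp
  thus ?thesis using psl_mul[OF G g h(1)] unfolding orbit_def by auto
qed

lemma mob_inj:
  assumes "a* d - b* c = 1" "of_real c * w + of_real d \<noteq> 0" "of_real c * x + of_real d \<noteq> 0"
    "mob (a,b,c,d) w = mob (a,b,c,d) (x::complex)"
  shows "w = x"
proof -
  have "(of_real a * w + of_real b) * (of_real c * x + of_real d) = (of_real a * x + of_real b) * (of_real c * w + of_real d)"
    using assms(4) frac_eq_eq[OF assms(2) assms(3)] by (simp add: mob_simp)
  hence "(of_real (a* d - b* c)) * (w - x) = 0" by (simp add: algebra_simps)
  thus ?thesis using assms(1) by simp
qed

lemma C1:
  assumes G: "psl_subgroup G" and g: "(a,b,c,d) \<in> G" and L: "Fin x \<in> limit_set G" and nz: "c* x + d \<noteq> 0"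
  shows "Fin ((a* x + b)/(c* x + d)) \<in> limit_set G"
proof -
  obtain z where z: "0 < Im z" "complex_of_real x islimpt orbit G z"
    using L unfolding limit_set_def by auto
  obtain f where f: "\<And>n. f n \<in> orbit G z - {complex_of_real x}" "f \<longlonglongrightarrow> complex_of_real x"
    using z(2) unfolding islimpt_sequential by auto
  have det: "a* d - b* c = 1" using psl_det[OF G g] by (simp add: msimps)
  have nzc: "of_real c * complex_of_real x + of_real d \<noteq> 0"
  proof -
    have "complex_of_real (c* x+d) \<noteq> 0" using nz by (simp only: of_real_eq_0_iff not_False_eq_True)
    thus ?thesis unfolding of_real_add of_real_mult .
  qed
  define y where "y = (a* x + b)/(c* x + d)"
  have my: "mob (a,b,c,d) (complex_of_real x) = complex_of_real y"
    by (simp only: mob_simp y_def of_real_divide of_real_add of_real_mult)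
  have lim0: "(\<lambda>n. mob (a,b,c,d) (f n)) \<longlonglongrightarrow> mob (a,b,c,d) (complex_of_real x)"
    unfolding mob_simp
    by (rule tendsto_divide[OF tendsto_add[OF tendsto_mult[OF tendsto_const f(2)] tendsto_const] tendsto_add[OF tendsto_mult[OF tendsto_const f(2)] tendsto_const] nzc])
  have lim: "(\<lambda>n. mob (a,b,c,d) (f n)) \<longlonglongrightarrow> complex_of_real y" using lim0 unfolding my .
  have allin: "\<forall>n. mob (a,b,c,d) (f n) \<in> orbit G z - {complex_of_real y}"
  proof
    fix n
    have fn: "f n \<in> orbit G z" "f n \<noteq> complex_of_real x" using f(1)[of n] by auto
    have "0 < Im (f n)" using orbit_Im[OF G z(1) fn(1)] .
    hence nzf: "of_real c * f n + of_real d \<noteq> 0" using denom_nz[of a b c d "f n"] psl_det[OF G g] by simp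
    have "mob (a,b,c,d) (f n) \<noteq> mob (a,b,c,d) (complex_of_real x)"
    proof
      assume "mob (a,b,c,d) (f n) = mob (a,b,c,d) (complex_of_real x)"
      hence "f n = complex_of_real x" by (rule mob_inj[OF det nzf nzc])
      with fn(2) show False by contradiction
    qed
    then show "mob (a,b,c,d) (f n) \<in> orbit G z - {complex_of_real y}"
      using orbit_closed[OF G z(1) fn(1) g] my by auto
  qed
  have "complex_of_real y islimpt orbit G z"
    unfolding islimpt_sequential by (rule exI[of _ "\<lambda>n. mob (a,b,c,d) (f n)"], rule conjI[OF allin lim])
  thus ?thesis using z(1) unfolding limit_set_def y_def by auto
qed

lemma C2:
  assumes G: "psl_subgroup G" and g: "(a,b,c,d) \<in> G" and L: "Fin x \<in> limit_set G" and z0: "c* x + d = 0"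
  shows "Infty \<in> limit_set G"
proof -
  obtain z where z: "0 < Im z" "complex_of_real x islimpt orbit G z"
    using L unfolding limit_set_def by auto
  obtain f where f: "\<And>n. f n \<in> orbit G z - {complex_of_real x}" "f \<longlonglongrightarrow> complex_of_real x"
    using z(2) unfolding islimpt_sequential by auto
  have det: "a* d - b* c = 1" using psl_det[OF G g] by (simp add: msimps)
  have "\<not> bounded (orbit G z)"
  proof
    assume "bounded (orbit G z)"
    then obtain B where B: "\<And>w. w \<in> orbit G z \<Longrightarrow> norm w \<le> B" unfolding bounded_iff by auto
    have le: "norm (of_real a * f n + of_real b) \<le> B * norm (of_real c * f n + of_real d)" for n
    proof -
      have fn: "f n \<in> orbit G z" using f(1)[of n] by auto
      have "0 < Im (f n)" using orbit_Im[OF G z(1) fn] .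
      hence nzf: "of_real c * f n + of_real d \<noteq> 0" using denom_nz[of a b c d "f n"] psl_det[OF G g] by simp
      have "norm (mob (a,b,c,d) (f n)) \<le> B" using B orbit_closed[OF G z(1) fn g] by blast
      hence "norm (of_real a * f n + of_real b) / norm (of_real c * f n + of_real d) \<le> B"
        by (simp only: mob_simp norm_divide)
      moreover have "norm (of_real c * f n + of_real d) > 0" using nzf by simp
      ultimately show ?thesis by (simp add: pos_divide_le_eq)
    qed
    have l1: "(\<lambda>n. norm (of_real a * f n + of_real b)) \<longlonglongrightarrow> norm (of_real a * complex_of_real x + of_real b)"
      by (rule tendsto_norm[OF tendsto_add[OF tendsto_mult[OF tendsto_const f(2)] tendsto_const]])
    have l2: "(\<lambda>n. B * norm (of_real c * f n + of_real d)) \<longlonglongrightarrow> B * norm (of_real c * complex_of_real x + of_real d)"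
      by (rule tendsto_mult[OF tendsto_const tendsto_norm[OF tendsto_add[OF tendsto_mult[OF tendsto_const f(2)] tendsto_const]]])
    have "norm (of_real a * complex_of_real x + of_real b) \<le> B * norm (of_real c * complex_of_real x + of_real d)"
    proof (rule tendsto_le[OF sequentially_bot l2 l1])
      show "eventually (\<lambda>n. norm (of_real a * f n + of_real b) \<le> B * norm (of_real c * f n + of_real d)) sequentially"
        by (rule always_eventually) (use le in blast)
    qed
    moreover have "of_real c * complex_of_real x + of_real d = 0"
    proof -
      have "complex_of_real (c* x+d) = 0" by (simp only: z0 of_real_0)
      thus ?thesis unfolding of_real_add of_real_mult .
    qed
    ultimately have "norm (of_real a * complex_of_real x + of_real b) \<le> 0" by simp
    hence "of_real a * complex_of_real x + of_real b = 0" by simp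
    hence "complex_of_real (a* x+b) = 0" unfolding of_real_add of_real_mult .
    hence ab: "a * x + b = 0" by (simp only: of_real_eq_0_iff)
    have "(a* x+b)* d - (c* x+d)* b = (a* d - b* c)* x" by (simp add: algebra_simps)
    hence x0: "x = 0" using z0 ab det by simp
    hence "d = 0" "b = 0" using z0 ab by auto
    thus False using det by simp
  qed
  thus ?thesis using z(1) unfolding limit_set_def by auto
qed

lemma C3:
  assumes G: "psl_subgroup G" and g: "(a,b,c,d) \<in> G" and L: "Infty \<in> limit_set G" and c0: "c \<noteq> 0"
  shows "Fin (a/c) \<in> limit_set G"
proof -
  obtain z where z: "0 < Im z" "\<not> bounded (orbit G z)"
    using L unfolding limit_set_def by auto
  have det: "a* d - b* c = 1" using psl_det[OF G g] by (simp add: msimps)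
  have "complex_of_real (a/c) islimpt orbit G z"
    unfolding islimpt_approachable
  proof (intro allI impI)
    fix e :: real assume e: "e > 0"
    define M where "M = (1/(\<bar>c\<bar>* e) + \<bar>d\<bar>)/\<bar>c\<bar>"
    obtain w where w: "w \<in> orbit G z" "norm w > M"
      using z(2) unfolding bounded_iff by (meson not_le)
    have "0 < Im w" using orbit_Im[OF G z(1) w(1)] .
    hence nzf: "of_real c * w + of_real d \<noteq> 0" using denom_nz[of a b c d w] psl_det[OF G g] by simp
    have "norm (of_real c * w + of_real d) \<ge> \<bar>c\<bar> * norm w - \<bar>d\<bar>"
      using norm_triangle_ineq2[of "of_real c * w" "- of_real d"] by (simp add: norm_mult)
    moreover have "\<bar>c\<bar> * norm w > \<bar>c\<bar> * M" using w(2) c0 by simp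
    moreover have "\<bar>c\<bar> * M = 1/(\<bar>c\<bar>* e) + \<bar>d\<bar>" using c0 by (simp add: M_def)
    ultimately have big: "norm (of_real c * w + of_real d) > 1/(\<bar>c\<bar>* e)" by linarith
    have eq: "mob (a,b,c,d) w - complex_of_real (a/c) = - 1 / (of_real c * (of_real c * w + of_real d))"
    proof -
      have "mob (a,b,c,d) w - complex_of_real (a/c) =
        ((of_real a * w + of_real b) * of_real c - of_real a * (of_real c * w + of_real d)) / (of_real c * (of_real c * w + of_real d))"
        using nzf c0 by (simp add: mob_simp field_simps)
      also have "(of_real a * w + of_real b) * of_real c - of_real a * (of_real c * w + of_real d) = - complex_of_real (a* d - b* c)"
        by (simp add: algebra_simps)
      finally show ?thesis using det by simp
    qed
    have pos: "0 < \<bar>c\<bar> * norm (of_real c * w + of_real d)" using c0 nzf by simp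
    have "dist (mob (a,b,c,d) w) (complex_of_real (a/c)) = 1 / (\<bar>c\<bar> * norm (of_real c * w + of_real d))"
      unfolding dist_norm eq by (simp add: norm_divide norm_mult)
    also have "\<dots> < e"
    proof -
      have "1/(\<bar>c\<bar>* e) * \<bar>c\<bar> < norm (of_real c * w + of_real d) * \<bar>c\<bar>"
        using big c0 by (intro mult_strict_right_mono) auto
      moreover have "1/(\<bar>c\<bar>* e) * \<bar>c\<bar> = 1/e" using c0 by simp
      ultimately have "1/e < \<bar>c\<bar> * norm (of_real c * w + of_real d)" by (simp add: mult.commute)
      hence "1 < e * (\<bar>c\<bar> * norm (of_real c * w + of_real d))" using e by (simp add: divide_less_eq mult.commute)
      thus ?thesis using pos by (simp add: divide_less_eq)
    qed
    finally have d: "dist (mob (a,b,c,d) w) (complex_of_real (a/c)) < e" .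
    have "mob (a,b,c,d) w \<noteq> complex_of_real (a/c)" using eq c0 nzf by auto
    thus "\<exists>x'\<in>orbit G z. x' \<noteq> complex_of_real (a / c) \<and> dist x' (complex_of_real (a / c)) < e"
      using d orbit_closed[OF G z(1) w(1) g] by blast
  qed
  thus ?thesis using z(1) unfolding limit_set_def by auto
qed




lemma ext_mmul:
  assumes dA: "mdet A \<noteq> 0" and dB: "mdet B \<noteq> 0"
  shows "ext_act (mmul A B) x = ext_act A (ext_act B x)"
proof -
  obtain a b c d where A: "A = (a,b,c,d)" by (cases A) auto
  obtain a' b' c' d' where B: "B = (a',b',c',d')" by (cases B) auto
  have da: "a* d - b* c \<noteq> 0" using dA A by (simp add: mdet_simp)
  have db: "a'* d' - b'* c' \<noteq> 0" using dB B by (simp add: mdet_simp)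
  show ?thesis
  proof (cases x)
    case Infty
    show ?thesis
    proof (cases "c' = 0")
      case True
      hence a0: "a' \<noteq> 0" using db by auto
      have "(a* a' + b* c') / (c* a' + d* c') = a / c" using True a0 by simp
      thus ?thesis using True a0 by (simp add: A B Infty mmul_simp ext_act_simps)
    next
      case False
      have e: "c * (a'/c') + d = (c* a' + d* c')/c'" using False by (simp add: field_simps)
      have e2: "a * (a'/c') + b = (a* a' + b* c')/c'" using False by (simp add: field_simps)
      have "ext_act A (ext_act B x) = (if c * (a'/c') + d = 0 then Infty else Fin ((a * (a'/c') + b) / (c * (a'/c') + d)))"
        using False by (simp only: A B Infty ext_act_simps if_False)
      also have "\<dots> = (if (c* a' + d* c')/c' = 0 then Infty else Fin (((a* a' + b* c')/c') / ((c* a' + d* c')/c')))"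
        by (simp only: e e2)
      also have "\<dots> = ext_act (mmul A B) x"
        using False by (simp add: A B Infty mmul_simp ext_act_simps)
      finally show ?thesis by simp
    qed
  next
    case (Fin y)
    have den: "(c* a' + d* c')* y + (c* b' + d* d') = c*(a'* y + b') + d*(c'* y + d')" by (simp add: algebra_simps)
    have num: "(a* a' + b* c')* y + (a* b' + b* d') = a*(a'* y + b') + b*(c'* y + d')" by (simp add: algebra_simps)
    show ?thesis
    proof (cases "c'* y + d' = 0")
      case True
      have nz: "a'* y + b' \<noteq> 0"
      proof
        assume h: "a'* y + b' = 0"
        have "(a'* y + b')* d' - (c'* y + d')* b' = (a'* d' - b'* c')* y" by (simp add: algebra_simps)
        hence "y = 0" using h True db by simp
        hence "b' = 0" "d' = 0" using h True by auto
        thus False using db by simp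
      qed
      have "ext_act (mmul A B) x = (if c*(a'* y + b') = 0 then Infty else Fin ((a*(a'* y + b'))/(c*(a'* y + b'))))"
        using True by (simp add: A B Fin mmul_simp ext_act_simps den num)
      also have "\<dots> = ext_act A (ext_act B x)"
        using True nz by (simp add: A B Fin ext_act_simps)
      finally show ?thesis .
    next
      case False
      define z where "z = (a'* y + b')/(c'* y + d')"
      have e1: "c* z + d = (c*(a'* y + b') + d*(c'* y + d'))/(c'* y + d')" using False by (simp add: z_def field_simps)
      have e2: "a* z + b = (a*(a'* y + b') + b*(c'* y + d'))/(c'* y + d')" using False by (simp add: z_def field_simps)
      have "ext_act A (ext_act B x) = (if c* z + d = 0 then Infty else Fin ((a* z + b)/(c* z + d)))"
        using False by (simp add: A B Fin ext_act_simps z_def)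
      also have "\<dots> = ext_act (mmul A B) x"
        using False by (simp add: A B Fin mmul_simp ext_act_simps den num e1 e2)
      finally show ?thesis by simp
    qed
  qed
qed

lemma ext_mid [simp]: "ext_act mid x = x"
  by (cases x) (simp_all add: mid_def ext_act_simps)




lemma minv_mmul: "minv (mmul X Y) = mmul (minv Y) (minv X)"
  by (cases X; cases Y) (simp add: msimps algebra_simps)
lemma minv_minv [simp]: "minv (minv X) = X"
  by (cases X) (simp add: msimps)
lemma mmul_mneg_mid: "mmul (mmul X (mneg mid)) Y = mneg (mmul X Y)"
  by (cases X; cases Y) (simp add: msimps algebra_simps)

lemma cancel1: "mdet h = 1 \<Longrightarrow> mmul h (mmul (minv h) x) = x"
  by (simp add: mmul_assoc[symmetric] mul_minv)
lemma cancel2: "mdet h = 1 \<Longrightarrow> mmul (minv h) (mmul h x) = x"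
  by (simp add: mmul_assoc[symmetric] minv_mul)

lemma LI:
  assumes G: "psl_subgroup G" and g: "\<gamma> \<in> G" and L: "Fin x \<in> limit_set G" and ni: "Infty \<notin> limit_set G"
  shows "ext_act \<gamma> (Fin x) \<in> limit_set G"
proof -
  obtain a b c d where gg: "\<gamma> = (a,b,c,d)" by (cases \<gamma>) auto
  show ?thesis
  proof (cases "c* x + d = 0")
    case True
    thus ?thesis using C2[OF G g[unfolded gg] L] ni by simp
  next
    case False
    thus ?thesis using C1[OF G g[unfolded gg] L False] by (simp add: gg ext_act_simps)
  qed
qed

definition conjm :: "mat2 \<Rightarrow> mat2 \<Rightarrow> mat2" where
  "conjm h \<gamma> = mmul (mmul h \<gamma>) (minv h)"

lemma conjm_inv: "mdet h = 1 \<Longrightarrow> conjm h (conjm (minv h) \<gamma>) = \<gamma>"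
  unfolding conjm_def by (simp add: mmul_assoc mul_minv minv_mul mdet_minv cancel1 cancel2)
lemma conjm_inv2: "mdet h = 1 \<Longrightarrow> conjm (minv h) (conjm h \<gamma>) = \<gamma>"
  unfolding conjm_def by (simp add: mmul_assoc mul_minv minv_mul mdet_minv cancel1 cancel2)
lemma conjm_mul: "mdet h = 1 \<Longrightarrow> conjm h (mmul x y) = mmul (conjm h x) (conjm h y)"
  unfolding conjm_def by (simp add: mmul_assoc minv_mul cancel2)
lemma conjm_minv: "conjm h (minv x) = minv (conjm h x)"
  unfolding conjm_def by (simp add: minv_mmul mmul_assoc)
lemma conjm_mid: "mdet h = 1 \<Longrightarrow> conjm h mid = mid"
  unfolding conjm_def by (simp add: mul_minv)
lemma conjm_mneg: "mdet h = 1 \<Longrightarrow> conjm h (mneg mid) = mneg mid"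
  unfolding conjm_def by (simp add: mmul_mneg_mid mul_minv)
lemma conjm_det: "mdet h = 1 \<Longrightarrow> mdet (conjm h x) = mdet x"
  unfolding conjm_def by (simp add: mdet_mmul mdet_minv)

lemma conj_group:
  assumes G: "psl_subgroup G" and dh: "mdet h = 1"
  shows "psl_subgroup (conjm h ` G)"
  unfolding psl_subgroup_def
proof (intro conjI ballI)
  fix x assume "x \<in> conjm h ` G"
  then obtain \<gamma> where "\<gamma> \<in> G" "x = conjm h \<gamma>" by blast
  thus "mdet x = 1" using conjm_det[OF dh] psl_det[OF G] by simp
next
  show "mid \<in> conjm h ` G" using conjm_mid[OF dh] G unfolding psl_subgroup_def by (metis image_eqI)
next
  show "mneg mid \<in> conjm h ` G" using conjm_mneg[OF dh] G unfolding psl_subgroup_def by (metis image_eqI)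
next
  fix x y assume "x \<in> conjm h ` G" "y \<in> conjm h ` G"
  then obtain \<gamma> \<delta> where "\<gamma> \<in> G" "x = conjm h \<gamma>" "\<delta> \<in> G" "y = conjm h \<delta>" by blast
  thus "mmul x y \<in> conjm h ` G" using conjm_mul[OF dh, of \<gamma> \<delta>] psl_mul[OF G] by (metis image_eqI)
next
  fix x assume "x \<in> conjm h ` G"
  then obtain \<gamma> where "\<gamma> \<in> G" "x = conjm h \<gamma>" by blast
  thus "minv x \<in> conjm h ` G" using conjm_minv[of h \<gamma>] psl_inv[OF G] by (metis image_eqI)
qed




lemma diag_or_antidiag:
  assumes d: "mdet M = 1"
    and e0: "ext_act M (Fin 0) \<in> {Fin 0, Infty}" and ei: "ext_act M Infty \<in> {Fin 0, Infty}"
  shows "(\<exists>\<alpha>. \<alpha> \<noteq> 0 \<and> M = (\<alpha>,0,0,1/\<alpha>)) \<or> (\<exists>\<beta>. \<beta> \<noteq> 0 \<and> M = (0,\<beta>,-1/\<beta>,0))"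
proof -
  obtain a b c d where M: "M = (a,b,c,d)" by (cases M) auto
  have det: "a* d - b* c = 1" using d M by (simp add: mdet_simp)
  have i: "c = 0 \<or> a = 0" using ei by (auto simp: M ext_act_simps split: if_splits)
  have z: "d = 0 \<or> b = 0" using e0 by (auto simp: M ext_act_simps split: if_splits)
  show ?thesis
  proof (cases "c = 0")
    case True
    hence "b = 0" using z det by auto
    hence ad: "a* d = 1" using True det by simp
    hence a0: "a \<noteq> 0" by auto
    have "d = 1/a" using ad a0 by (simp add: eq_divide_eq mult.commute)
    hence "a \<noteq> 0 \<and> M = (a,0,0,1/a)" using a0 M True \<open>b = 0\<close> by simp
    thus ?thesis by blast
  next
    case False
    hence a0: "a = 0" using i by simp
    hence "d = 0" using z det by auto
    hence bc: "b* c = -1" using a0 det by simp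
    hence b0: "b \<noteq> 0" by auto
    have "c = -1/b" using bc b0 by (simp add: field_simps)
    hence "b \<noteq> 0 \<and> M = (0,b,-1/b,0)" using a0 b0 M \<open>d = 0\<close> by simp
    thus ?thesis by blast
  qed
qed

lemma mmul_cont [continuous_intros]:
  assumes "continuous F f" "continuous F g"
  shows "continuous F (\<lambda>x. mmul (f x) (g x))"
proof -
  have e: "mmul M N = (fst M * fst N + fst (snd M) * fst (snd (snd N)),
      fst M * fst (snd N) + fst (snd M) * snd (snd (snd N)),
      fst (snd (snd M)) * fst N + snd (snd (snd M)) * fst (snd (snd N)),
      fst (snd (snd M)) * fst (snd N) + snd (snd (snd M)) * snd (snd (snd N)))" for M N
    by (cases M; cases N) (simp add: mmul_simp)
  show ?thesis unfolding e by (intro continuous_intros assms)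
qed




lemma sup_gap:
  fixes T :: "real set"
  assumes "s0 \<in> T" "\<And>s. s \<in> T \<Longrightarrow> s \<le> B" "\<delta> > 0"
    "\<And>s. s \<in> T \<Longrightarrow> h s \<in> T \<and> h s \<ge> s + \<delta>"
  shows False
proof -
  have ne: "T \<noteq> {}" using assms(1) by auto
  have bdd: "bdd_above T" by (rule bdd_aboveI[of T B]) (rule assms(2))
  have "Sup T - \<delta> < Sup T" using assms(3) by simp
  then obtain s where s: "s \<in> T" "Sup T - \<delta> < s" using less_cSup_iff[OF ne bdd] by auto
  have "h s \<le> Sup T" using cSup_upper[OF _ bdd] assms(4)[OF s(1)] by blast
  moreover have "h s \<ge> s + \<delta>" using assms(4)[OF s(1)] by blast
  ultimately show False using s(2) by linarith
qed

lemma inf_gap: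
  fixes T :: "real set"
  assumes "s0 \<in> T" "\<And>s. s \<in> T \<Longrightarrow> B \<le> s" "\<delta> > 0"
    "\<And>s. s \<in> T \<Longrightarrow> h s \<in> T \<and> h s \<le> s - \<delta>"
  shows False
proof -
  have ne: "T \<noteq> {}" using assms(1) by auto
  have bdd: "bdd_below T" by (rule bdd_belowI[of T B]) (rule assms(2))
  have "Inf T < Inf T + \<delta>" using assms(3) by simp
  then obtain s where s: "s \<in> T" "s < Inf T + \<delta>" using cInf_less_iff[OF ne bdd, of "Inf T + \<delta>"] by auto
  have "Inf T \<le> h s" using cInf_lower[OF _ bdd] assms(4)[OF s(1)] by blast
  moreover have "h s \<le> s - \<delta>" using assms(4)[OF s(1)] by blast
  ultimately show False using s(2) by linarith
qed

lemma h_minus: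
  fixes \<tau> s :: real
  assumes "0 < \<tau> - s"
  shows "1/(\<tau> - s) - s = (s^2 - \<tau>* s + 1)/(\<tau> - s)"
  using assms by (simp add: field_simps power2_eq_square)

lemma real_key_pos:
  fixes \<tau> :: real and T :: "real set"
  assumes ge1: "\<And>s. s \<in> T \<Longrightarrow> 1 \<le> \<bar>s\<bar>"
    and cl: "\<And>s. s \<in> T \<Longrightarrow> s \<noteq> \<tau> \<and> 1/(\<tau> - s) \<in> T"
    and two: "s1 \<in> T" "s2 \<in> T" "s1 \<noteq> s2"
    and tpos: "0 \<le> \<tau>"
  shows "\<tau> = 0 \<and> T \<subseteq> {-1,1}"
proof -
  define h where "h s = 1/(\<tau> - s)" for s
  define q where "q s = s^2 - \<tau>* s + 1" for s
  have bnd: "\<bar>\<tau> - s\<bar> \<le> 1" if "s \<in> T" for s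
  proof -
    have hs: "1 \<le> \<bar>1/(\<tau> - s)\<bar>" using ge1 cl that by blast
    have nz: "\<tau> - s \<noteq> 0" using cl that by auto
    have "\<bar>1/(\<tau> - s)\<bar> = 1/\<bar>\<tau> - s\<bar>" by simp
    with hs nz show ?thesis by (simp add: le_divide_eq)
  qed
  show ?thesis
  proof (cases "\<tau> = 0")
    case True
    have "s \<in> {-1,1}" if "s \<in> T" for s
      using bnd[OF that] ge1[OF that] True by (auto simp: abs_if split: if_splits)
    thus ?thesis using True by blast
  next
    case False
    hence tp: "0 < \<tau>" using tpos by simp
    have ge: "1 \<le> s" if "s \<in> T" for s
    proof -
      have "\<bar>\<tau> - s\<bar> \<le> 1" using bnd[OF that] .
      hence "s \<ge> \<tau> - 1" by linarith
      thus ?thesis using ge1[OF that] tp by (auto simp: abs_if split: if_splits)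
    qed
    have props: "1 \<le> s \<and> 0 < \<tau> - s \<and> \<tau> - s \<le> 1 \<and> h s \<in> T" if "s \<in> T" for s
    proof -
      have hT: "h s \<in> T" using cl that h_def by auto
      hence "1 \<le> 1/(\<tau> - s)" using ge h_def by simp
      hence p: "0 < \<tau> - s" using divide_le_0_1_iff[of "\<tau> - s"] by linarith
      thus ?thesis using ge[OF that] bnd[OF that] hT by simp
    qed
    have hq: "h s - s = q s / (\<tau> - s)" if "s \<in> T" for s
      using h_minus[of \<tau> s] props[OF that] by (simp add: h_def q_def)
    have up: "h s \<ge> s + q s" if "s \<in> T" "q s \<ge> 0" for s
    proof -
      have t: "0 < \<tau> - s" "\<tau> - s \<le> 1" using props[OF that(1)] by auto
      have "q s * (\<tau> - s) \<le> q s" using t that(2) by (simp add: mult_left_le)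
      hence "q s \<le> q s / (\<tau> - s)" using t by (simp add: le_divide_eq)
      thus ?thesis using hq[OF that(1)] by simp
    qed
    have down: "h s \<le> s + q s" if "s \<in> T" "q s \<le> 0" for s
    proof -
      have t: "0 < \<tau> - s" "\<tau> - s \<le> 1" using props[OF that(1)] by auto
      have "q s \<le> q s * (\<tau> - s)" using t that(2) by (simp add: mult_le_cancel_left1 mult_le_0_iff)
      hence "q s / (\<tau> - s) \<le> q s" using t by (simp add: divide_le_eq)
      thus ?thesis using hq[OF that(1)] by simp
    qed
    have qsq: "q s = (s - \<tau>/2)^2 + (1 - \<tau>^2/4)" for s
      by (simp add: q_def power2_eq_square field_simps)
    show ?thesis
    proof (cases "\<tau> < 2")
      case True
      define \<kappa> where "\<kappa> = 1 - \<tau>^2/4"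
      have kp: "\<kappa> > 0"
      proof -
        have "\<tau>^2 < 2^2" using True tp by (intro power_strict_mono) auto
        thus ?thesis by (simp add: \<kappa>_def)
      qed
      have False
      proof (rule sup_gap[of s1 T \<tau> \<kappa> h])
        show "s1 \<in> T" by fact
        show "s \<le> \<tau>" if "s \<in> T" for s using props[OF that] by simp
        show "0 < \<kappa>" by fact
        show "h s \<in> T \<and> s + \<kappa> \<le> h s" if "s \<in> T" for s
        proof -
          have "q s \<ge> \<kappa>" using qsq[of s] by (simp add: \<kappa>_def)
          thus ?thesis using props[OF that] up[OF that] kp by simp
        qed
      qed
      thus ?thesis ..
    next
      case False
      hence t2: "2 \<le> \<tau>" by simp
      obtain s0 where s0: "s0 \<in> T" "q s0 \<noteq> 0"
      proof -
        have "\<not> (q s1 = 0 \<and> q s2 = 0)"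
        proof
          assume qq: "q s1 = 0 \<and> q s2 = 0"
          have "q s1 - q s2 = (s1 - s2) * (s1 + s2 - \<tau>)" by (simp add: q_def power2_eq_square algebra_simps)
          hence "s1 + s2 = \<tau>" using qq two(3) by simp
          hence "q s1 = s1^2 - (s1 + s2)* s1 + 1" by (simp add: q_def)
          hence "q s1 = 1 - s1 * s2" by (simp add: power2_eq_square algebra_simps)
          hence p1: "s1 * s2 = 1" using qq by simp
          have a1: "1 \<le> s1" "1 \<le> s2" using ge two by auto
          have "s1 * 1 \<le> s1 * s2" using a1 by (intro mult_left_mono) auto
          hence "s1 = 1" using p1 a1 by simp
          moreover have "1 * s2 \<le> s1 * s2" using a1 by (intro mult_right_mono) auto
          hence "s2 = 1" using p1 a1 by simp
          ultimately show False using two(3) by simp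
        qed
        thus ?thesis using that two by blast
      qed
      have False
      proof (cases "q s0 > 0")
        case True
        define T' where "T' = {s \<in> T. s0 \<le> s}"
        have qmono: "q s \<ge> q s0" if "s \<in> T'" for s
        proof -
          have s: "s \<in> T" "s0 \<le> s" using that T'_def by auto
          have "q s - q s0 = (s - s0) * (s + s0 - \<tau>)" by (simp add: q_def power2_eq_square algebra_simps)
          moreover have sp: "s + s0 - \<tau> \<ge> 0" using props[OF s(1)] props[OF s0(1)] t2 by linarith
          moreover have "(s - s0) * (s + s0 - \<tau>) \<ge> 0" using s(2) sp by simp
          ultimately show ?thesis by linarith
        qed
        show False
        proof (rule sup_gap[of s0 T' \<tau> "q s0" h])
          show "s0 \<in> T'" using s0 T'_def by auto
          show "s \<le> \<tau>" if "s \<in> T'" for s using props[of s] that T'_def by auto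
          show "0 < q s0" by fact
          show "h s \<in> T' \<and> s + q s0 \<le> h s" if "s \<in> T'" for s
          proof -
            have s: "s \<in> T" "s0 \<le> s" using that T'_def by auto
            have "h s \<ge> s + q s" using up[OF s(1)] qmono[OF that] True by simp
            thus ?thesis using qmono[OF that] props[OF s(1)] s True T'_def by auto
          qed
        qed
      next
        case False
        hence qn: "q s0 < 0" using s0(2) by simp
        define T' where "T' = {s \<in> T. s \<le> s0}"
        have q1: "q 1 < 0"
        proof -
          have "\<tau> \<noteq> 2"
          proof
            assume "\<tau> = 2"
            hence "q s0 = (s0 - 1)^2" by (simp add: q_def power2_eq_square algebra_simps)
            thus False using qn by simp
          qed
          thus ?thesis using t2 by (simp add: q_def)
        qed
        define \<delta> where "\<delta> = min (- q 1) (- q s0)"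
        have dp: "\<delta> > 0" using q1 qn by (simp add: \<delta>_def)
        have qb: "q s \<le> - \<delta>" if "s \<in> T'" for s
        proof -
          have s: "s \<in> T" "s \<le> s0" "1 \<le> s" using that T'_def props by auto
          show ?thesis
          proof (cases "s \<le> \<tau>/2")
            case True
            have "(\<tau>/2 - s)^2 \<le> (\<tau>/2 - 1)^2" using True s by (intro power_mono) auto
            hence "q s \<le> q 1" using qsq[of s] qsq[of 1] by (simp add: power2_commute)
            thus ?thesis by (simp add: \<delta>_def)
          next
            case False
            have "(s - \<tau>/2)^2 \<le> (s0 - \<tau>/2)^2" using False s by (intro power_mono) auto
            hence "q s \<le> q s0" using qsq[of s] qsq[of s0] by simp
            thus ?thesis by (simp add: \<delta>_def)
          qed
        qed
        show False
        proof (rule inf_gap[of s0 T' 1 \<delta> h])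
          show "s0 \<in> T'" using s0 T'_def by auto
          show "1 \<le> s" if "s \<in> T'" for s using props that T'_def by auto
          show "0 < \<delta>" by fact
          show "h s \<in> T' \<and> h s \<le> s - \<delta>" if "s \<in> T'" for s
          proof -
            have s: "s \<in> T" "s \<le> s0" using that T'_def by auto
            have "h s \<le> s + q s" using down[OF s(1)] qb[OF that] dp by simp
            thus ?thesis using qb[OF that] props[OF s(1)] s dp T'_def by auto
          qed
        qed
      qed
      thus ?thesis ..
    qed
  qed
qed

lemma real_key:
  fixes \<tau> :: real and T :: "real set"
  assumes ge1: "\<And>s. s \<in> T \<Longrightarrow> 1 \<le> \<bar>s\<bar>"
    and cl: "\<And>s. s \<in> T \<Longrightarrow> s \<noteq> \<tau> \<and> 1/(\<tau> - s) \<in> T"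
    and two: "s1 \<in> T" "s2 \<in> T" "s1 \<noteq> s2"
  shows "\<tau> = 0 \<and> T \<subseteq> {-1,1}"
proof (cases "0 \<le> \<tau>")
  case True
  show ?thesis by (rule real_key_pos[OF ge1 cl two True])
next
  case False
  let ?T = "uminus ` T"
  have "- \<tau> = 0 \<and> ?T \<subseteq> {-1,1}"
  proof (rule real_key_pos[of ?T "-\<tau>" "-s1" "-s2"])
    show "1 \<le> \<bar>s\<bar>" if "s \<in> ?T" for s using that ge1 by auto
    show "s \<noteq> - \<tau> \<and> 1 / (- \<tau> - s) \<in> ?T" if "s \<in> ?T" for s
    proof -
      from that obtain u where u: "u \<in> T" "s = - u" by (rule imageE)
      have "1/(- \<tau> - s) = 1/(- (\<tau> - u))" using u by simp
      also have "\<dots> = - (1/(\<tau> - u))" by (rule divide_minus_right)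
      finally have "1/(- \<tau> - s) = - (1/(\<tau> - u))" .
      thus ?thesis using cl[OF u(1)] u by auto
    qed
    show "- s1 \<in> ?T" "- s2 \<in> ?T" using two by auto
    show "- s1 \<noteq> - s2" using two by simp
    show "0 \<le> - \<tau>" using False by simp
  qed
  thus ?thesis using False by simp
qed




lemma special_case:
  assumes F: "fuchsian \<Gamma>" and g: "(a,b,c,d) \<in> \<Gamma>" and cpos: "c > 0" and tr: "a + d = 0"
    and ni: "Infty \<notin> limit_set \<Gamma>" and L: "limit_set \<Gamma> = {Fin p, Fin q}"
    and p: "p = (-1-d)/c" and q: "q = (1-d)/c"
  shows "\<exists>lam>1. psl_conjugate \<Gamma> (special_group lam)"
proof -
  have G: "psl_subgroup \<Gamma>" using F by (simp add: fuchsian_def)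
  have det: "a* d - b* c = 1" using psl_det[OF G g] by (simp add: mdet_simp)
  define u where "u = sqrt (c/2)"
  have u0: "u > 0" using cpos by (simp add: u_def)
  have uu: "u* u = c/2" using cpos by (simp add: u_def)
  define h where "h = (q* u, p* u, u, u)"
  have qp: "q - p = 2/c" using cpos by (simp add: p q field_simps)
  have dh: "mdet h = 1"
  proof -
    have "mdet h = (q - p)*(u* u)" by (simp add: h_def mdet_simp algebra_simps)
    thus ?thesis using qp uu cpos by simp
  qed
  have dhi: "mdet (minv h) = 1" using dh by (simp add: mdet_minv)
  define J where "J = ((0::real),(-1::real),(1::real),(0::real))"
  have gh: "mmul (a,b,c,d) h = mmul h J"
  proof -
    have a: "a = -d" using tr by simp
    have bc: "b* c = -1 - d* d" using det a by simp
    have e1: "a* q + b = p" using cpos bc by (simp add: a p q field_simps; simp add: algebra_simps)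
    have e2: "a* p + b = -q" using cpos bc by (simp add: a p q field_simps; simp add: algebra_simps)
    have e3: "c* q + d = 1" using cpos by (simp add: q field_simps)
    have e4: "c* p + d = -1" using cpos by (simp add: p field_simps)
    have "mmul (a,b,c,d) h = ((a* q + b)* u, (a* p+b)* u, (c* q+d)* u, (c* p+d)* u)"
      by (simp add: h_def mmul_simp algebra_simps)
    also have "\<dots> = mmul h J" using e1 e2 e3 e4 by (simp add: h_def J_def mmul_simp)
    finally show ?thesis .
  qed
  have gJ: "conjm (minv h) (a,b,c,d) = J"
    unfolding conjm_def minv_minv by (simp add: mmul_assoc gh cancel2 dh)
  define \<Gamma>' where "\<Gamma>' = conjm (minv h) ` \<Gamma>"
  have G': "psl_subgroup \<Gamma>'" unfolding \<Gamma>'_def by (rule conj_group[OF G dhi])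
  have Gback: "\<Gamma> = conjm h ` \<Gamma>'"
  proof -
    have "conjm h ` \<Gamma>' = (\<lambda>x. conjm h (conjm (minv h) x)) ` \<Gamma>" unfolding \<Gamma>'_def by (simp add: image_comp comp_def)
    also have "\<dots> = \<Gamma>" using conjm_inv[OF dh] by simp
    finally show ?thesis by simp
  qed
  have JG: "J \<in> \<Gamma>'" using gJ g unfolding \<Gamma>'_def by (metis image_eqI)
  have pL: "Fin p \<in> limit_set \<Gamma>" and qL: "Fin q \<in> limit_set \<Gamma>" using L by auto
  have hFin0: "ext_act h (Fin 0) = Fin p" using u0 by (simp add: h_def ext_act_simps)
  have hInf: "ext_act h Infty = Fin q" using u0 by (simp add: h_def ext_act_simps)
  have hinvp: "ext_act (minv h) (Fin p) = Fin 0"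
    using ext_mmul[of "minv h" h "Fin 0"] dh dhi minv_mul[OF dh] hFin0 by simp
  have hinvq: "ext_act (minv h) (Fin q) = Infty"
    using ext_mmul[of "minv h" h Infty] dh dhi minv_mul[OF dh] hInf by simp
  have shape: "(\<exists>\<alpha>. \<alpha> \<noteq> 0 \<and> M = (\<alpha>,0,0,1/\<alpha>)) \<or> (\<exists>\<beta>. \<beta> \<noteq> 0 \<and> M = (0,\<beta>,-1/\<beta>,0))"
    if M: "M \<in> \<Gamma>'" for M
  proof -
    obtain \<gamma> where \<gamma>: "\<gamma> \<in> \<Gamma>" "M = conjm (minv h) \<gamma>" using M unfolding \<Gamma>'_def by blast
    have d\<gamma>: "mdet \<gamma> = 1" using psl_det[OF G \<gamma>(1)] .
    have M2: "M = mmul (mmul (minv h) \<gamma>) h" using \<gamma>(2) by (simp add: conjm_def)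
    have dM: "mdet M = 1" using \<gamma>(2) conjm_det[OF dhi] d\<gamma> by simp
    have act: "ext_act M y = ext_act (minv h) (ext_act \<gamma> (ext_act h y))" for y
    proof -
      have "mdet (mmul (minv h) \<gamma>) = 1" using dhi d\<gamma> by (simp add: mdet_mmul)
      thus ?thesis unfolding M2 using ext_mmul dh dhi d\<gamma> by simp
    qed
    have inL: "ext_act \<gamma> (Fin x) \<in> {Fin p, Fin q}" if "x = p \<or> x = q" for x
      using LI[OF G \<gamma>(1) _ ni, of x] that pL qL L by auto
    have "ext_act M (Fin 0) \<in> {Fin 0, Infty}"
      using act[of "Fin 0"] hFin0 inL[of p] hinvp hinvq by auto
    moreover have "ext_act M Infty \<in> {Fin 0, Infty}"
      using act[of Infty] hInf inL[of q] hinvp hinvq by auto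
    ultimately show ?thesis using diag_or_antidiag[OF dM] by blast
  qed
  define D where "D k = (k, 0::real, 0::real, 1/k)" for k :: real
  have Dmul: "D (k* m) \<in> \<Gamma>'" if "D k \<in> \<Gamma>'" "D m \<in> \<Gamma>'" for k m
  proof -
    have "mmul (D k) (D m) = D (k* m)" by (simp add: D_def mmul_simp)
    thus ?thesis using psl_mul[OF G' that] by simp
  qed
  have Dinv: "D (1/k) \<in> \<Gamma>'" if "D k \<in> \<Gamma>'" for k
  proof -
    have "minv (D k) = D (1/k)" by (simp add: D_def minv_simp)
    thus ?thesis using psl_inv[OF G' that] by simp
  qed
  have Dneg: "D (-k) \<in> \<Gamma>'" if "D k \<in> \<Gamma>'" for k
  proof -
    have e: "mmul (mneg mid) (D k) = D (-k)" by (simp add: D_def mmul_simp mneg_simp mid_def)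
    have mnG: "mneg mid \<in> \<Gamma>'" using G' by (simp add: psl_subgroup_def)
    have "mmul (mneg mid) (D k) \<in> \<Gamma>'" by (rule psl_mul[OF G' mnG that])
    thus ?thesis by (simp only: e)
  qed
  have D1: "D 1 = mid" by (simp add: D_def mid_def)
  have Dnz: "k \<noteq> 0" if "D k \<in> \<Gamma>'" for k
    using psl_det[OF G' that] by (auto simp: D_def mdet_simp)
  have midG: "mid \<in> \<Gamma>" using G by (simp add: psl_subgroup_def)
  have iso: "mid isolated_in \<Gamma>" using F midG by (simp add: fuchsian_def)
  obtain T where T: "open T" "T \<inter> \<Gamma> = {mid}" using iso unfolding isolated_in_def by blast
  have "mid \<in> T" using T(2) by blast
  then obtain \<epsilon> where \<epsilon>: "\<epsilon> > 0" "ball mid \<epsilon> \<subseteq> T" using T(1) open_contains_ball by blast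
  define Fk where "Fk k = conjm h (D k)" for k
  have cont: "continuous (at 1) Fk"
    unfolding Fk_def conjm_def D_def by (intro continuous_intros) auto
  have Fk1: "Fk 1 = mid" unfolding Fk_def D1 using conjm_mid[OF dh] .
  obtain \<delta> where \<delta>: "\<delta> > 0" "\<And>k. dist k 1 < \<delta> \<Longrightarrow> dist (Fk k) mid < \<epsilon>"
    using cont \<epsilon>(1) unfolding continuous_at_eps_delta Fk1 by blast
  have disc: "\<delta> \<le> \<bar>k - 1\<bar>" if k: "D k \<in> \<Gamma>'" "k \<noteq> 1" for k
  proof (rule ccontr)
    assume "\<not> \<delta> \<le> \<bar>k - 1\<bar>"
    hence "dist k 1 < \<delta>" by (simp add: dist_real_def)
    hence "dist (Fk k) mid < \<epsilon>" by (rule \<delta>(2))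
    hence "Fk k \<in> T" using \<epsilon>(2) by (auto simp: dist_commute)
    moreover have "Fk k \<in> \<Gamma>" using k(1) Gback unfolding Fk_def by blast
    ultimately have "Fk k = mid" using T(2) by blast
    hence "D k = conjm (minv h) mid" unfolding Fk_def using conjm_inv2[OF dh, of "D k"] by simp
    hence "D k = mid" using conjm_mid[OF dhi] by simp
    thus False using k(2) by (simp add: D_def mid_def)
  qed
  have antiD: "D (1/\<beta>) \<in> \<Gamma>'" if "(0,\<beta>,-1/\<beta>,0) \<in> \<Gamma>'" "\<beta> \<noteq> 0" for \<beta>
  proof -
    have "mmul J (0,\<beta>,-1/\<beta>,0) = D (1/\<beta>)" using that(2) by (simp add: J_def D_def mmul_simp)
    thus ?thesis using psl_mul[OF G' JG that(1)] by simp
  qed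
  have exk: "\<exists>k. D k \<in> \<Gamma>' \<and> \<bar>k\<bar> \<noteq> 1"
  proof (rule ccontr)
    assume "\<not> ?thesis"
    hence nk: "\<And>k. D k \<in> \<Gamma>' \<Longrightarrow> \<bar>k\<bar> = 1" by blast
    have sub: "\<Gamma>' \<subseteq> {D 1, D (-1), (0,1,-1,0), (0,-1,1,0)}"
    proof
      fix M assume M: "M \<in> \<Gamma>'"
      from shape[OF M] show "M \<in> {D 1, D (-1), (0,1,-1,0), (0,-1,1,0)}"
      proof
        assume "\<exists>\<alpha>. \<alpha> \<noteq> 0 \<and> M = (\<alpha>,0,0,1/\<alpha>)"
        then obtain \<alpha> where "M = D \<alpha>" by (auto simp: D_def)
        hence "\<bar>\<alpha>\<bar> = 1" using nk M by simp
        thus ?thesis using \<open>M = D \<alpha>\<close> by (auto simp: abs_if split: if_splits)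
      next
        assume "\<exists>\<beta>. \<beta> \<noteq> 0 \<and> M = (0,\<beta>,-1/\<beta>,0)"
        then obtain \<beta> where b: "\<beta> \<noteq> 0" "M = (0,\<beta>,-1/\<beta>,0)" by blast
        have "D (1/\<beta>) \<in> \<Gamma>'" using antiD[of \<beta>] b M by simp
        hence "\<bar>1/\<beta>\<bar> = 1" using nk by blast
        hence "\<bar>\<beta>\<bar> = 1" by (simp add: abs_divide)
        thus ?thesis using b by (auto simp: abs_if split: if_splits)
      qed
    qed
    hence fin': "finite \<Gamma>'" by (rule finite_subset) simp
    hence fin: "finite \<Gamma>" using Gback by simp
    obtain z where z: "complex_of_real p islimpt orbit \<Gamma> z" using pL unfolding limit_set_def by auto
    have "finite (orbit \<Gamma> z)" unfolding orbit_def using fin by simp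
    thus False using z islimpt_finite by blast
  qed
  define KP where "KP = {k. 1 < k \<and> D k \<in> \<Gamma>'}"
  have KPne: "KP \<noteq> {}"
  proof -
    obtain k where k: "D k \<in> \<Gamma>'" "\<bar>k\<bar> \<noteq> 1" using exk by blast
    have k0: "k \<noteq> 0" using Dnz[OF k(1)] .
    have ak: "D \<bar>k\<bar> \<in> \<Gamma>'" using k(1) Dneg[OF k(1)] by (cases "k \<ge> 0") auto
    show ?thesis
    proof (cases "\<bar>k\<bar> > 1")
      case True thus ?thesis using ak unfolding KP_def by blast
    next
      case False
      hence "\<bar>k\<bar> < 1" "0 < \<bar>k\<bar>" using k(2) k0 by auto
      hence "1/\<bar>k\<bar> > 1" using less_divide_eq_1_pos[of "\<bar>k\<bar>" 1] by simp
      thus ?thesis using Dinv[OF ak] unfolding KP_def by blast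
    qed
  qed
  have bddKP: "bdd_below KP" unfolding KP_def by (rule bdd_belowI[of _ 1]) simp
  define \<mu> where "\<mu> = Inf KP"
  have mu_le: "\<mu> \<le> k" if "k \<in> KP" for k unfolding \<mu>_def by (rule cInf_lower[OF that bddKP])
  have mu_ge1: "1 \<le> \<mu>" unfolding \<mu>_def by (rule cInf_greatest[OF KPne]) (simp add: KP_def)
  have muKP: "\<mu> \<in> KP"
  proof (rule ccontr)
    assume nmu: "\<mu> \<notin> KP"
    have "\<mu> < \<mu> * (1 + \<delta>)" using mu_ge1 \<delta>(1) by (simp add: algebra_simps)
    then obtain k1 where k1: "k1 \<in> KP" "k1 < \<mu> * (1 + \<delta>)"
      using cInf_less_iff[OF KPne bddKP, of "\<mu> * (1 + \<delta>)"] unfolding \<mu>_def by auto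
    have "\<mu> \<noteq> k1" using nmu k1(1) by auto
    hence mk1: "\<mu> < k1" using mu_le[OF k1(1)] by simp
    then obtain k2 where k2: "k2 \<in> KP" "k2 < k1"
      using cInf_less_iff[OF KPne bddKP, of k1] unfolding \<mu>_def by auto
    have "\<mu> \<noteq> k2" using nmu k2(1) by auto
    hence mk2: "\<mu> < k2" using mu_le[OF k2(1)] by simp
    have Dk1: "D k1 \<in> \<Gamma>'" and Dk2: "D k2 \<in> \<Gamma>'" using k1(1) k2(1) by (auto simp: KP_def)
    define r where "r = k1 * (1/k2)"
    have Dr: "D r \<in> \<Gamma>'" unfolding r_def by (rule Dmul[OF Dk1 Dinv[OF Dk2]])
    have k2p: "k2 > 0" using mk2 mu_ge1 by simp
    have r1: "r > 1" using k2 k2p by (simp add: r_def)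
    have "r < k1 / \<mu>" using mk2 k2p mu_ge1 k1 KP_def r_def
      by (simp add: divide_strict_left_mono frac_less2)
    also have "k1 / \<mu> < 1 + \<delta>" using k1(2) mu_ge1 by (simp add: divide_less_eq mult.commute)
    finally have "r - 1 < \<delta>" by simp
    moreover have "\<delta> \<le> \<bar>r - 1\<bar>" using disc[OF Dr] r1 by simp
    ultimately show False using r1 by simp
  qed
  have mu1: "\<mu> > 1" and Dmu: "D \<mu> \<in> \<Gamma>'" using muKP by (auto simp: KP_def)
  have mu0: "\<mu> > 0" using mu1 by simp
  have pow: "\<forall>k. D k \<in> \<Gamma>' \<longrightarrow> 1 \<le> k \<longrightarrow> k < \<mu>^N \<longrightarrow> (\<exists>n. k = \<mu>^n)" for N
  proof (induct N)
    case 0 thus ?case by simp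
  next
    case (Suc N)
    show ?case
    proof (intro allI impI)
      fix k assume k: "D k \<in> \<Gamma>'" "1 \<le> k" "k < \<mu>^Suc N"
      show "\<exists>n. k = \<mu>^n"
      proof (cases "k < \<mu>")
        case True
        have "\<not> 1 < k"
        proof
          assume "1 < k"
          hence "k \<in> KP" using k(1) by (simp add: KP_def)
          thus False using mu_le True by fastforce
        qed
        hence "k = \<mu>^0" using k(2) by simp
        thus ?thesis by blast
      next
        case False
        define k' where "k' = k * (1/\<mu>)"
        have Dk': "D k' \<in> \<Gamma>'" unfolding k'_def by (rule Dmul[OF k(1) Dinv[OF Dmu]])
        have "1 \<le> k'" using False mu0 by (simp add: k'_def)
        moreover have "k' < \<mu>^N" using k(3) mu0 by (simp add: k'_def divide_less_eq mult.commute)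
        ultimately obtain n where "k' = \<mu>^n" using Suc Dk' by blast
        hence "k = \<mu>^Suc n" using mu0 by (simp add: k'_def field_simps)
        thus ?thesis by blast
      qed
    qed
  qed
  define S where "S = special_group (\<mu>^2)"
  have genmu: "(sqrt (\<mu>^2), 0, 0, 1 / sqrt (\<mu>^2)) = D \<mu>" using mu0 by (simp add: D_def)
  have S_def': "S = gen_group {J, D \<mu>, mneg mid}"
    unfolding S_def special_group_def genmu[symmetric] J_def by simp
  have DS: "D (\<mu>^n) \<in> S" for n
  proof (induct n)
    case 0 thus ?case using D1 by (simp add: S_def' gen_group.gen_id)
  next
    case (Suc n)
    have "mmul (D \<mu>) (D (\<mu>^n)) = D (\<mu>^Suc n)" by (simp add: D_def mmul_simp)
    moreover have "mmul (D \<mu>) (D (\<mu>^n)) \<in> S"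
      unfolding S_def' by (rule gen_group.gen_mul[OF gen_group.gen_base Suc[unfolded S_def']]) simp
    ultimately show ?case by simp
  qed
  have DSinv: "D (1/\<mu>^n) \<in> S" for n
  proof -
    have "minv (D (\<mu>^n)) = D (1/\<mu>^n)" by (simp add: D_def minv_simp)
    thus ?thesis using gen_group.gen_inv[OF DS[of n, unfolded S_def']] unfolding S_def' by simp
  qed
  have DSneg: "D (-k) \<in> S" if "D k \<in> S" for k
  proof -
    have "mmul (mneg mid) (D k) = D (-k)" by (simp add: D_def mmul_simp mneg_simp mid_def)
    moreover have "mmul (mneg mid) (D k) \<in> S"
      unfolding S_def' by (rule gen_group.gen_mul[OF gen_group.gen_base that[unfolded S_def']]) simp
    ultimately show ?thesis by simp
  qed
  have Dpos: "D k \<in> S" if kk: "D k \<in> \<Gamma>'" "0 < k" for k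
  proof (cases "1 \<le> k")
    case True
    obtain N where "k < \<mu>^N" using real_arch_pow[OF mu1] by blast
    then obtain n where "k = \<mu>^n" using pow True kk(1) by blast
    thus ?thesis using DS by simp
  next
    case False
    have "1 \<le> 1/k" using False kk(2) by simp
    obtain N where "1/k < \<mu>^N" using real_arch_pow[OF mu1] by blast
    then obtain n where "1/k = \<mu>^n" using pow \<open>1 \<le> 1/k\<close> Dinv[OF kk(1)] by blast
    hence "1/(1/k) = 1/\<mu>^n" by (simp only:)
    hence "k = 1/\<mu>^n" by (simp only: divide_divide_eq_right div_by_1 mult_1)
    thus ?thesis using DSinv by simp
  qed
  have Dall: "D k \<in> S" if "D k \<in> \<Gamma>'" for k
  proof (cases "0 < k")
    case True thus ?thesis using Dpos that by blast
  next
    case False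
    hence "0 < -k" using Dnz[OF that] by simp
    hence "D (-k) \<in> S" using Dpos Dneg[OF that] by blast
    thus ?thesis using DSneg[of "-k"] by simp
  qed
  have sub1: "\<Gamma>' \<subseteq> S"
  proof
    fix M assume M: "M \<in> \<Gamma>'"
    from shape[OF M] show "M \<in> S"
    proof
      assume "\<exists>\<alpha>. \<alpha> \<noteq> 0 \<and> M = (\<alpha>,0,0,1/\<alpha>)"
      then obtain \<alpha> where "M = D \<alpha>" by (auto simp: D_def)
      thus ?thesis using Dall M by simp
    next
      assume "\<exists>\<beta>. \<beta> \<noteq> 0 \<and> M = (0,\<beta>,-1/\<beta>,0)"
      then obtain \<beta> where b: "\<beta> \<noteq> 0" "M = (0,\<beta>,-1/\<beta>,0)" by blast
      have "minv J \<in> S" unfolding S_def' by (rule gen_group.gen_inv[OF gen_group.gen_base]) simp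
      moreover have "D (1/\<beta>) \<in> S" using Dall antiD[of \<beta>] b M by simp
      ultimately have "mmul (minv J) (D (1/\<beta>)) \<in> S" unfolding S_def' by (rule gen_group.gen_mul)
      moreover have "mmul (minv J) (D (1/\<beta>)) = M" using b by (simp add: J_def D_def minv_simp mmul_simp)
      ultimately show ?thesis by simp
    qed
  qed
  have sub2: "S \<subseteq> \<Gamma>'"
  proof
    fix M assume "M \<in> S"
    hence "M \<in> gen_group {J, D \<mu>, mneg mid}" unfolding S_def' .
    thus "M \<in> \<Gamma>'"
    proof (induct rule: gen_group.induct)
      case gen_id thus ?case using G' by (simp add: psl_subgroup_def)
    next
      case (gen_base x) thus ?case using JG Dmu G' by (auto simp: psl_subgroup_def)
    next
      case (gen_mul x y) thus ?case using psl_mul[OF G'] by blast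
    next
      case (gen_inv x) thus ?case using psl_inv[OF G'] by blast
    qed
  qed
  have "S = \<Gamma>'" using sub1 sub2 by blast
  hence "(\<lambda>g. mmul (mmul h g) (minv h)) ` S = conjm h ` \<Gamma>'" by (simp add: conjm_def)
  hence "\<Gamma> = (\<lambda>g. mmul (mmul h g) (minv h)) ` S" using Gback by simp
  hence "psl_conjugate \<Gamma> S" unfolding psl_conjugate_def using dh by blast
  moreover have "\<mu>^2 > 1" using mu1 by (simp add: one_less_power)
  ultimately show ?thesis unfolding S_def by blast
qed



lemma main_pos:
  assumes F: "fuchsian \<Gamma>" and g: "(a,b,c,d) \<in> \<Gamma>" and cpos: "c > 0"
    and nc: "\<not> (\<exists>lam>1. psl_conjugate \<Gamma> (special_group lam))"
    and two: "\<exists>p q. p \<in> limit_set \<Gamma> \<and> q \<in> limit_set \<Gamma> \<and> p \<noteq> q"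
  shows "\<exists>x\<in>W_int (a,b,c,d). Fin x \<in> limit_set \<Gamma>"
proof (rule ccontr)
  assume H: "\<not> ?thesis"
  have G: "psl_subgroup \<Gamma>" using F by (simp add: fuchsian_def)
  have det: "a* d - b* c = 1" using psl_det[OF G g] by (simp add: mdet_simp)
  have Wc: "x \<in> W_int (a,b,c,d) \<longleftrightarrow> \<bar>c* x + d\<bar> < 1" for x
  proof -
    have "x \<in> W_int (a,b,c,d) \<longleftrightarrow> -d/c - 1/c < x \<and> x < -d/c + 1/c"
      using cpos by (simp add: W_int_def entry_simps)
    also have "\<dots> \<longleftrightarrow> -d - 1 < c* x \<and> c* x < -d + 1"
      using cpos by (simp add: field_simps)
    also have "\<dots> \<longleftrightarrow> \<bar>c* x + d\<bar> < 1" by (simp add: abs_less_iff) linarith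
    finally show ?thesis .
  qed
  have gi: "(d,-b,-c,a) \<in> \<Gamma>" using psl_inv[OF G g] by (simp add: minv_simp)
  show False
  proof (cases "Infty \<in> limit_set \<Gamma>")
    case True
    have "Fin (d/(-c)) \<in> limit_set \<Gamma>" using C3[OF G gi True] cpos by simp
    moreover have "d/(-c) \<in> W_int (a,b,c,d)" using cpos by (simp add: Wc)
    ultimately show False using H by blast
  next
    case False
    note ni = False
    obtain P Q where PQ: "P \<in> limit_set \<Gamma>" "Q \<in> limit_set \<Gamma>" "P \<noteq> Q" using two by blast
    obtain x1 where x1: "P = Fin x1" using PQ(1) ni by (cases P) auto
    obtain x2 where x2: "Q = Fin x2" using PQ(2) ni by (cases Q) auto
    define T where "T = {c* x + d | x. Fin x \<in> limit_set \<Gamma>}"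
    have ge1: "1 \<le> \<bar>s\<bar>" if sT: "s \<in> T" for s
    proof -
      obtain x where x: "s = c* x + d" "Fin x \<in> limit_set \<Gamma>" using sT T_def by blast
      have "x \<notin> W_int (a,b,c,d)" using H x(2) by blast
      thus ?thesis using Wc x(1) by simp
    qed
    have cl: "s \<noteq> (a + d) \<and> 1/((a + d) - s) \<in> T" if sT: "s \<in> T" for s
    proof -
      obtain x where x: "s = c* x + d" "Fin x \<in> limit_set \<Gamma>" using sT T_def by blast
      have nz: "(-c)* x + a \<noteq> 0"
      proof
        assume "(-c)* x + a = 0"
        thus False using C2[OF G gi x(2)] ni by simp
      qed
      have L2: "Fin ((d* x + -b)/((-c)* x + a)) \<in> limit_set \<Gamma>" using C1[OF G gi x(2) nz] .
      have "c * ((d* x + -b)/((-c)* x + a)) + d = (a* d - b* c)/((-c)* x + a)"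
        using nz by (simp add: field_simps)
      also have "\<dots> = 1/((a + d) - s)" using det x(1) by (simp add: algebra_simps)
      finally have e: "1/((a + d) - s) = c * ((d* x + -b)/((-c)* x + a)) + d" by simp
      have "1/((a + d) - s) \<in> T" unfolding T_def e using L2 by (intro CollectI exI conjI) (rule refl)
      moreover have "s \<noteq> a + d" using nz x(1) by simp
      ultimately show ?thesis by simp
    qed
    have t1: "c* x1 + d \<in> T" "c* x2 + d \<in> T" using PQ x1 x2 T_def by auto
    have t3: "c* x1 + d \<noteq> c* x2 + d" using PQ(3) x1 x2 cpos by simp
    have key: "a + d = 0 \<and> T \<subseteq> {-1,1}" by (rule real_key[OF ge1 cl t1 t3])
    define p where "p = (-1-d)/c"
    define q where "q = (1-d)/c"
    have pq: "p \<noteq> q" using cpos by (simp add: p_def q_def)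
    have inpq: "y \<in> {Fin p, Fin q}" if yL: "y \<in> limit_set \<Gamma>" for y
    proof -
      obtain x where x: "y = Fin x" using yL ni by (cases y) auto
      have "c* x + d \<in> T" using yL x T_def by blast
      hence "c* x + d = -1 \<or> c* x + d = 1" using key by blast
      moreover have "x = ((c* x + d) - d)/c" using cpos by simp
      ultimately have "x = p \<or> x = q" unfolding p_def q_def by (metis diff_minus_eq_add minus_diff_eq)
      thus ?thesis using x by auto
    qed
    have Lset: "limit_set \<Gamma> = {Fin p, Fin q}"
    proof
      show "limit_set \<Gamma> \<subseteq> {Fin p, Fin q}" using inpq by blast
      have "P \<in> {Fin p, Fin q}" "Q \<in> {Fin p, Fin q}" using inpq PQ by auto
      hence "(P = Fin p \<and> Q = Fin q) \<or> (P = Fin q \<and> Q = Fin p)" using PQ(3) by blast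
      thus "{Fin p, Fin q} \<subseteq> limit_set \<Gamma>" using PQ(1,2) by blast
    qed
    have "\<exists>lam>1. psl_conjugate \<Gamma> (special_group lam)"
      by (rule special_case[OF F g cpos _ ni Lset p_def q_def]) (use key in simp)
    thus False using nc by blast
  qed
qed

theorem lemma2p2:
  fixes \<Gamma> :: "mat2 set"
  assumes "fuchsian \<Gamma>"
    and "geometrically_finite \<Gamma>"
    and "Infty \<notin> Rst \<Gamma>"
    and "\<not> (\<exists>lam>1. psl_conjugate \<Gamma> (special_group lam))"
    and "\<exists>p q. p \<in> limit_set \<Gamma> \<and> q \<in> limit_set \<Gamma> \<and> p \<noteq> q"
  shows "\<forall>g\<in>\<Gamma>. entry_c g \<noteq> 0 \<longrightarrow> (\<exists>x\<in>W_int g. Fin x \<in> limit_set \<Gamma>)"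
proof (intro ballI impI)
  fix g assume g: "g \<in> \<Gamma>" and c0: "entry_c g \<noteq> 0"
  obtain a b c d where gg: "g = (a,b,c,d)" by (cases g) auto
  have G: "psl_subgroup \<Gamma>" using assms(1) by (simp add: fuchsian_def)
  show "\<exists>x\<in>W_int g. Fin x \<in> limit_set \<Gamma>"
  proof (cases "c > 0")
    case True
    thus ?thesis using main_pos[OF assms(1) g[unfolded gg] True assms(4) assms(5)] gg by simp
  next
    case False
    hence cn: "-c > 0" using c0 gg by (simp add: entry_simps)
    have "(-a,-b,-c,-d) \<in> \<Gamma>" using psl_neg[OF G g] gg by (simp add: mneg_simp)
    from main_pos[OF assms(1) this cn assms(4) assms(5)]
    obtain x where "x \<in> W_int (-a,-b,-c,-d)" "Fin x \<in> limit_set \<Gamma>" by blast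
    moreover have "W_int (-a,-b,-c,-d) = W_int g" by (simp add: gg W_int_def entry_simps)
    ultimately show ?thesis by blast
  qed
qed


end
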